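(* Let $m \geq 2$ be an integer, let $\alpha \in (0,1)$ be real, and let $\mu$ be a nonzero finite Borel measure on $\mathbb{T}$ such that for $\mu$-a.e. $x\in\mathbb{T}$ the upper $\alpha$-density $\Theta^{\alpha,*}(\mu,x)$ is finite and the lower $\alpha$-density $\Theta_{\alpha,*}(\mu,x)$ is positive. Then $$\mathcal{C}_{loc}(\mu,\alpha) \;\geq\; \sup_{i,j \in \mathbb{N}} \max\left( \frac{m^{\alpha i}}{\lfloor m^{\alpha i}\rfloor},\ \frac{\lceil m^{\alpha j}\rceil}{m^{\alpha j}} \right).$$
   Context: Fix an integer $m\ge 2$ and let $\mathbb{T}=\{0,1,\dots,m-1\}^{\mathbb{N}}$ be the set of infinite sequences $a=(a_1,a_2,\dots)$ with entries in $\{0,\dots,m-1\}$. For distinct $a,b\in\mathbb{T}$ let $n(a,b)$ be the first index at which $a$ and $b$ differ, and set $d(a,b)=m^{-n(a,b)+1}$ (and $d(a,a)=0$); $(\mathbb{T},d)$ is a metric space. For an integer $n\ge 0$ and $x\in\mathbb{T}$, $B_n(x)$ denotes the closed ball $B(x,m^{-n})$, which is the set of sequences agreeing with $x$ in the first $n$ positions; such sets are called ($m$-adic) intervals of level $n$ (so $\mathbb{T}$ is the unique interval of level $0$). For a Borel measure $\mu$ on $\mathbb{T}$ and $\alpha>0$, the upper and lower $\alpha$-densities at $x$ are $\Theta^{\alpha,*}(\mu,x)=\limsup_{n\to\infty} m^{\alpha n}\mu(B_n(x))$ and $\Theta_{\alpha,*}(\mu,x)=\liminf_{n\to\infty} m^{\alpha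 n}\mu(B_n(x))$. When upper densities are finite and lower densities positive $\mu$-a.e., define $\mathcal{C}_{loc}(\mu,\alpha)=\operatorname{ess\,sup}_{x\in\mathbb{T}} \frac{\Theta^{\alpha,*}(\mu,x)}{\Theta_{\alpha,*}(\mu,x)}$, the essential supremum taken with respect to $\mu$. $\lfloor x\rfloor$ and $\lceil x\rceil$ denote floor and ceiling; $\mathbb{N}=\{1,2,\dots\}$. *)

theory Defs
  imports "HOL-Probability.Probability"
begin

text \<open>The sequence space T = {0,..,m-1}^N (positions indexed from 0 here).\<close>
definition seqT :: "nat \<Rightarrow> (nat \<Rightarrow> nat) set" where
  "seqT m = {x. \<forall>k. x k < m}"

text \<open>m-adic interval of level n containing x: sequences agreeing with x in the first n positions
 (= closed ball B(x, m^-n) for the metric d).\<close>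
definition adic_ball :: "nat \<Rightarrow> nat \<Rightarrow> (nat \<Rightarrow> nat) \<Rightarrow> (nat \<Rightarrow> nat) set" where
  "adic_ball m n x = {y \<in> seqT m. \<forall>k<n. y k = x k}"

text \<open>Borel sigma-algebra of (T,d): generated by the (countably many) closed balls, i.e. the m-adic intervals.\<close>
definition borelT :: "nat \<Rightarrow> (nat \<Rightarrow> nat) set set" where
  "borelT m = sigma_sets (seqT m) {adic_ball m n x | n x. x \<in> seqT m}"

definition upper_density :: "nat \<Rightarrow> (nat \<Rightarrow> nat) measure \<Rightarrow> real \<Rightarrow> (nat \<Rightarrow> nat) \<Rightarrow> ereal" where
  "upper_density m \<mu> \<alpha> x =
     limsup (\<lambda>n. ereal (real m powr (\<alpha> * real n) * measure \<mu> (adic_ball m n x)))"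

definition lower_density :: "nat \<Rightarrow> (nat \<Rightarrow> nat) measure \<Rightarrow> real \<Rightarrow> (nat \<Rightarrow> nat) \<Rightarrow> ereal" where
  "lower_density m \<mu> \<alpha> x =
     liminf (\<lambda>n. ereal (real m powr (\<alpha> * real n) * measure \<mu> (adic_ball m n x)))"

definition C_loc :: "nat \<Rightarrow> (nat \<Rightarrow> nat) measure \<Rightarrow> real \<Rightarrow> ereal" where
  "C_loc m \<mu> \<alpha> = esssup \<mu> (\<lambda>x. upper_density m \<mu> \<alpha> x / lower_density m \<mu> \<alpha> x)"

end

theory Submission
  imports Defs
begin


lemma exists_small_eps:
  fixes f g :: "real \<Rightarrow> real"
  assumes "(f \<longlongrightarrow> f0) (at_right 0)" "f0 > 0" "(g \<longlongrightarrow> g0) (at_right 0)" "g0 > 0"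
  shows "\<exists>\<epsilon>. 0 < \<epsilon> \<and> \<epsilon> < 1 \<and> f \<epsilon> > 0 \<and> g \<epsilon> > 0"
proof -
  have "eventually (\<lambda>\<epsilon>. f \<epsilon> > 0) (at_right 0)" using assms(1,2) by (rule order_tendstoD)
  moreover have "eventually (\<lambda>\<epsilon>. g \<epsilon> > 0) (at_right 0)" using assms(3,4) by (rule order_tendstoD)
  moreover have "eventually (\<lambda>\<epsilon>. \<epsilon> \<in> {0<..<1}) (at_right (0::real))" by (rule eventually_at_right_real) simp
  ultimately have "eventually (\<lambda>\<epsilon>. f \<epsilon> > 0 \<and> g \<epsilon> > 0 \<and> \<epsilon> \<in> {0<..<1}) (at_right 0)"
    by eventually_elim auto
  then obtain \<epsilon> where "f \<epsilon> > 0 \<and> g \<epsilon> > 0 \<and> \<epsilon> \<in> {0<..<1}"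
    using eventually_happens[of _ "at_right (0::real)"] by auto
  then show ?thesis by auto
qed

lemma RA:
  fixes r c :: real
  assumes r1: "1 < r" and c: "0 < c"
    and H: "\<And>\<epsilon>. 0 < \<epsilon> \<Longrightarrow> \<epsilon> < 1 \<Longrightarrow> \<exists>k::nat. k * (1 - \<epsilon>) \<le> r * (1 + \<epsilon>)^2 \<and>
       (1 - \<epsilon>) * r * (1 - \<epsilon>) \<le> k * (c * (1 + \<epsilon>)^2)"
  shows "r / real_of_int \<lfloor>r\<rfloor> \<le> c"
proof (rule ccontr)
  define F where "F = real_of_int \<lfloor>r\<rfloor>"
  have F1: "1 \<le> F" unfolding F_def using r1 by simp
  assume "\<not> ?thesis"
  then have "c < r / F" unfolding F_def by simp
  then have Fc: "F * c < r" using F1 by (simp add: less_divide_eq mult.commute)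
  have rF: "r < F + 1" unfolding F_def by linarith
  have t1: "((\<lambda>\<epsilon>. (F + 1) * (1 - \<epsilon>) - r * (1 + \<epsilon>)^2) \<longlongrightarrow> (F + 1) * (1 - 0) - r * (1 + 0)^2) (at_right 0)"
    by (intro tendsto_intros)
  have t2: "((\<lambda>\<epsilon>. (1 - \<epsilon>) * r * (1 - \<epsilon>) - F * c * (1 + \<epsilon>)^2) \<longlongrightarrow> (1 - 0) * r * (1 - 0) - F * c * (1 + 0)^2) (at_right 0)"
    by (intro tendsto_intros)
  obtain \<epsilon> where e: "0 < \<epsilon>" "\<epsilon> < 1" "(F + 1) * (1 - \<epsilon>) - r * (1 + \<epsilon>)^2 > 0"
    "(1 - \<epsilon>) * r * (1 - \<epsilon>) - F * c * (1 + \<epsilon>)^2 > 0"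
    using exists_small_eps[OF t1 _ t2] rF Fc by auto
  obtain k :: nat where k: "k * (1 - \<epsilon>) \<le> r * (1 + \<epsilon>)^2" "(1 - \<epsilon>) * r * (1 - \<epsilon>) \<le> k * (c * (1 + \<epsilon>)^2)"
    using H[OF e(1,2)] by blast
  have "k * (1 - \<epsilon>) < (F + 1) * (1 - \<epsilon>)" using k(1) e(3) by linarith
  then have "real k < F + 1" using e(2) by (simp add: mult_less_cancel_right)
  then have "int k < \<lfloor>r\<rfloor> + 1" unfolding F_def by linarith
  then have kF: "real k \<le> F" unfolding F_def by linarith
  have "k * (c * (1 + \<epsilon>)^2) \<le> F * (c * (1 + \<epsilon>)^2)" using kF c by (intro mult_right_mono) auto
  then show False using k(2) e(4) by (simp add: algebra_simps)
qed

lemma RB: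
  fixes r c :: real
  assumes r0: "0 < r" and c: "0 < c"
    and H: "\<And>\<epsilon>. 0 < \<epsilon> \<Longrightarrow> \<epsilon> < 1 \<Longrightarrow> \<exists>k::nat. k * (1 - \<epsilon>) \<le> c * r * (1 + \<epsilon>)^2 \<and>
       (1 - \<epsilon>) * r * (1 - \<epsilon>) \<le> k * (1 + \<epsilon>)^2"
  shows "real_of_int \<lceil>r\<rceil> / r \<le> c"
proof (rule ccontr)
  define D where "D = real_of_int \<lceil>r\<rceil>"
  assume "\<not> ?thesis"
  then have "c < D / r" unfolding D_def by simp
  then have Dc: "c * r < D" using r0 by (simp add: less_divide_eq)
  have rD: "D - 1 < r" unfolding D_def by linarith
  have t1: "((\<lambda>\<epsilon>. D * (1 - \<epsilon>) - c * r * (1 + \<epsilon>)^2) \<longlongrightarrow> D * (1 - 0) - c * r * (1 + 0)^2) (at_right 0)"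
    by (intro tendsto_intros)
  have t2: "((\<lambda>\<epsilon>. (1 - \<epsilon>) * r * (1 - \<epsilon>) - (D - 1) * (1 + \<epsilon>)^2) \<longlongrightarrow> (1 - 0) * r * (1 - 0) - (D - 1) * (1 + 0)^2) (at_right 0)"
    by (intro tendsto_intros)
  obtain \<epsilon> where e: "0 < \<epsilon>" "\<epsilon> < 1" "D * (1 - \<epsilon>) - c * r * (1 + \<epsilon>)^2 > 0"
    "(1 - \<epsilon>) * r * (1 - \<epsilon>) - (D - 1) * (1 + \<epsilon>)^2 > 0"
    using exists_small_eps[OF t1 _ t2] rD Dc by auto
  obtain k :: nat where k: "k * (1 - \<epsilon>) \<le> c * r * (1 + \<epsilon>)^2" "(1 - \<epsilon>) * r * (1 - \<epsilon>) \<le> k * (1 + \<epsilon>)^2"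
    using H[OF e(1,2)] by blast
  have "k * (1 - \<epsilon>) < D * (1 - \<epsilon>)" using k(1) e(3) by linarith
  then have "real k < D" using e(2) by (simp add: mult_less_cancel_right)
  moreover have "(D - 1) * (1 + \<epsilon>)^2 < k * (1 + \<epsilon>)^2" using k(2) e(4) by linarith
  then have "D - 1 < real k" using e(1) by (simp add: mult_less_cancel_right)
  ultimately have a: "real_of_int (int k) < real_of_int \<lceil>r\<rceil>" "real_of_int (\<lceil>r\<rceil> - 1) < real_of_int (int k)"
    unfolding D_def by simp_all
  have "int k < \<lceil>r\<rceil>" using a(1) by (simp only: of_int_less_iff)
  moreover have "\<lceil>r\<rceil> - 1 < int k" using a(2) by (simp only: of_int_less_iff)
  ultimately show False by linarith
qed



lemma aux0: "(t::real) \<noteq> 0 \<Longrightarrow> t * (E / (2 * t)) = E / 2" by simp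
lemma aux: "(\<eta>::real) > 0 \<Longrightarrow> (1 + 1/\<eta>) * (E * \<eta> / (2 * (1 + \<eta>))) = E / 2"
proof -
  assume h: "\<eta> > 0"
  have "(1 + 1/\<eta>) * (E * \<eta> / (2 * (1 + \<eta>))) = (1 + 1/\<eta>) * \<eta> * (E / (2 * (1 + \<eta>)))" by simp
  also have "(1 + 1/\<eta>) * \<eta> = 1 + \<eta>" using h by (simp add: distrib_right)
  also have "(1 + \<eta>) * (E / (2 * (1 + \<eta>))) = E / 2" using h by (intro aux0) simp
  finally show ?thesis .
qed

definition pre :: "nat \<Rightarrow> (nat \<Rightarrow> nat) \<Rightarrow> (nat \<Rightarrow> nat)" where
  "pre n x = restrict x {..<n}"

lemma pre_eq_iff: "pre n y = pre n x \<longleftrightarrow> (\<forall>k<n. y k = x k)"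
  unfolding pre_def by (auto simp: fun_eq_iff restrict_def)

lemma adic_ball_pre: "adic_ball m n x = {y \<in> seqT m. pre n y = pre n x}"
  unfolding adic_ball_def pre_eq_iff by simp

definition cyl :: "nat \<Rightarrow> nat \<Rightarrow> (nat \<Rightarrow> nat) set \<Rightarrow> bool" where
  "cyl m n A \<longleftrightarrow> A \<subseteq> seqT m \<and> (\<forall>x\<in>A. adic_ball m n x \<subseteq> A)"

lemma ball_self: "x \<in> seqT m \<Longrightarrow> x \<in> adic_ball m n x"
  by (simp add: adic_ball_def)

lemma ball_sub: "adic_ball m n x \<subseteq> seqT m"
  by (auto simp: adic_ball_def)

lemma ball_eq: "y \<in> adic_ball m n x \<Longrightarrow> adic_ball m n y = adic_ball m n x"
  by (auto simp: adic_ball_def)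

lemma ball_mono: "n \<le> n' \<Longrightarrow> adic_ball m n' x \<subseteq> adic_ball m n x"
  by (auto simp: adic_ball_def)

lemma cyl_mono: "cyl m n A \<Longrightarrow> n \<le> n' \<Longrightarrow> cyl m n' A"
  unfolding cyl_def using ball_mono by blast

lemma cyl_compl: "cyl m n A \<Longrightarrow> cyl m n (seqT m - A)"
  unfolding cyl_def using ball_eq ball_sub ball_self by blast

lemma cyl_Un: "cyl m n A \<Longrightarrow> cyl m n B \<Longrightarrow> cyl m n (A \<union> B)"
  unfolding cyl_def by blast

lemma cyl_empty: "cyl m n {}"
  unfolding cyl_def by blast

lemma cyl_ball: "x \<in> seqT m \<Longrightarrow> cyl m n (adic_ball m n x)"
  unfolding cyl_def using ball_eq ball_sub by blast

lemma finite_pre: "finite (pre n ` seqT m)"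
proof (rule finite_subset)
  show "pre n ` seqT m \<subseteq> PiE {..<n} (\<lambda>_. {..<m})"
    by (auto simp: pre_def seqT_def PiE_def extensional_def)
  show "finite (PiE {..<n} (\<lambda>_. {..<m}))" by (simp add: finite_PiE)
qed

lemma ball_via_pre: "pre n y = pre n x \<Longrightarrow> adic_ball m n y = adic_ball m n x"
  by (simp add: adic_ball_pre)

lemma finite_balls: "A \<subseteq> seqT m \<Longrightarrow> finite ((\<lambda>x. adic_ball m n x) ` A)"
proof -
  assume A: "A \<subseteq> seqT m"
  have "(\<lambda>x. adic_ball m n x) ` A = (\<lambda>p. {y \<in> seqT m. pre n y = p}) ` (pre n ` A)"
    by (auto simp: adic_ball_pre image_iff)
  moreover have "finite (pre n ` A)" using finite_pre A by (meson finite_subset image_mono)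
  ultimately show ?thesis by simp
qed

definition fd :: "nat \<Rightarrow> (nat \<Rightarrow> nat) measure \<Rightarrow> real \<Rightarrow> nat \<Rightarrow> (nat \<Rightarrow> nat) \<Rightarrow> real" where
  "fd m \<mu> \<alpha> n x = real m powr (\<alpha> * real n) * measure \<mu> (adic_ball m n x)"

locale tree = finite_measure M for M :: "(nat \<Rightarrow> nat) measure" +
  fixes m :: nat
  assumes sp: "space M = seqT m" and st: "sets M = borelT m"
begin

lemma ball_sets: "adic_ball m n x \<in> sets M"
proof (cases "adic_ball m n x = {}")
  case True then show ?thesis by simp
next
  case False
  then obtain y where y: "y \<in> adic_ball m n x" by blast
  then have "y \<in> seqT m" using ball_sub by blast
  then have "adic_ball m n y \<in> sets M"
    unfolding st borelT_def by (intro sigma_sets.Basic) blast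
  then show ?thesis using ball_eq[OF y] by simp
qed

lemma cyl_sets: assumes "cyl m n A" shows "A \<in> sets M"
proof -
  have A: "A \<subseteq> seqT m" using assms cyl_def by blast
  have "A = \<Union>((\<lambda>x. adic_ball m n x) ` A)"
    using assms ball_self A unfolding cyl_def by blast
  moreover have "\<Union>((\<lambda>x. adic_ball m n x) ` A) \<in> sets M"
    using finite_balls[OF A] ball_sets by (intro sets.finite_Union) auto
  ultimately show ?thesis by simp
qed

lemma sets_sub: "A \<in> sets M \<Longrightarrow> A \<subseteq> seqT m"
  using sets.sets_into_space sp by blast

lemma cyl_UN: "(\<And>i. i \<in> I \<Longrightarrow> cyl m (nf i) (Af i)) \<Longrightarrow> (\<And>i. i \<in> I \<Longrightarrow> nf i \<le> N)
   \<Longrightarrow> cyl m N (\<Union>i\<in>I. Af i)"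
  unfolding cyl_def using ball_mono by fast

lemma approx:
  assumes "E \<in> sets M" "\<delta> > 0"
  shows "\<exists>n A. cyl m n A \<and> measure M (E - A) + measure M (A - E) < \<delta>"
proof -
  have "E \<in> sigma_sets (seqT m) {adic_ball m n x | n x. x \<in> seqT m}"
    using assms(1) st borelT_def by simp
  then show ?thesis using assms(2)
  proof (induct arbitrary: \<delta> rule: sigma_sets.induct)
    case (Basic a)
    then obtain n x where "a = adic_ball m n x" "x \<in> seqT m" by blast
    then have "cyl m n a" using cyl_ball by simp
    then show ?case using Basic by (intro exI[of _ n] exI[of _ a]) simp
  next
    case Empty
    then show ?case using cyl_empty by (intro exI[of _ 0] exI[of _ "{}"]) simp
  next
    case (Compl a)
    then obtain n A where A: "cyl m n A" "measure M (a - A) + measure M (A - a) < \<delta>" by blast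
    have "a \<in> sets M" using Compl(1) st borelT_def by simp
    then have "a \<subseteq> seqT m" using sets_sub by blast
    moreover have "A \<subseteq> seqT m" using A(1) cyl_def by blast
    ultimately have "(seqT m - a) - (seqT m - A) = A - a" "(seqT m - A) - (seqT m - a) = a - A" by blast+
    then show ?case using A cyl_compl[OF A(1)] by (intro exI[of _ n] exI[of _ "seqT m - A"]) simp
  next
    case (Union a)
    have as: "a i \<in> sets M" for i using Union(1) st borelT_def by simp
    define B where "B K = (\<Union>i<K. a i)" for K
    have Bs: "B K \<in> sets M" for K unfolding B_def using as by blast
    have "incseq B" unfolding B_def incseq_def by (auto intro: UN_mono) (meson less_le_trans lessThan_iff)
    moreover have "(\<Union>K. B K) = (\<Union>i. a i)" unfolding B_def by blast
    ultimately have "(\<lambda>K. measure M (B K)) \<longlonglongrightarrow> measure M (\<Union>i. a i)"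
      using finite_Lim_measure_incseq[of B] Bs by auto
    then have "eventually (\<lambda>K. measure M (B K) > measure M (\<Union>i. a i) - \<delta>/2) sequentially"
      using Union(3) by (intro order_tendstoD) auto
    then obtain K where K: "measure M (B K) > measure M (\<Union>i. a i) - \<delta>/2"
      unfolding eventually_sequentially by blast
    have "\<forall>i. \<exists>n A. cyl m n A \<and> measure M (a i - A) + measure M (A - a i) < \<delta> / (2 * (K+1))"
      using Union(2) Union(3) by simp
    then obtain nf Af where nA: "\<And>i. cyl m (nf i) (Af i)"
        "\<And>i. measure M (a i - Af i) + measure M (Af i - a i) < \<delta> / (2 * (K+1))"
      by metis
    define A where "A = (\<Union>i<K. Af i)"
    have cA: "cyl m (\<Sum>i<K. nf i) A" unfolding A_def
      by (rule cyl_UN[OF nA(1)]) (auto intro: member_le_sum)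
    have Afs: "Af i \<in> sets M" for i using nA(1) cyl_sets by blast
    have sub1: "(\<Union>i. a i) - A \<subseteq> ((\<Union>i. a i) - B K) \<union> (\<Union>i<K. a i - Af i)"
      unfolding A_def B_def by blast
    have sub2: "A - (\<Union>i. a i) \<subseteq> (\<Union>i<K. Af i - a i)"
      unfolding A_def by blast
    have "measure M ((\<Union>i. a i) - A) \<le> measure M (((\<Union>i. a i) - B K) \<union> (\<Union>i<K. a i - Af i))"
      using sub1 as Afs Bs by (intro finite_measure_mono) auto
    also have "\<dots> \<le> measure M ((\<Union>i. a i) - B K) + measure M (\<Union>i<K. a i - Af i)"
      using as Afs Bs by (intro measure_Un_le) auto
    also have "measure M ((\<Union>i. a i) - B K) = measure M (\<Union>i. a i) - measure M (B K)"
      using as Bs by (intro finite_measure_Diff) (auto simp: B_def)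
    also have "measure M (\<Union>i<K. a i - Af i) \<le> (\<Sum>i<K. measure M (a i - Af i))"
      using as Afs by (intro finite_measure_subadditive_finite) auto
    finally have e1: "measure M ((\<Union>i. a i) - A) \<le> measure M (\<Union>i. a i) - measure M (B K) + (\<Sum>i<K. measure M (a i - Af i))"
      by simp
    have "measure M (A - (\<Union>i. a i)) \<le> measure M (\<Union>i<K. Af i - a i)"
      using sub2 as Afs by (intro finite_measure_mono) auto
    also have "\<dots> \<le> (\<Sum>i<K. measure M (Af i - a i))"
      using as Afs by (intro finite_measure_subadditive_finite) auto
    finally have e2: "measure M (A - (\<Union>i. a i)) \<le> (\<Sum>i<K. measure M (Af i - a i))" .
    have "(\<Sum>i<K. measure M (a i - Af i)) + (\<Sum>i<K. measure M (Af i - a i))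
        = (\<Sum>i<K. measure M (a i - Af i) + measure M (Af i - a i))" by (simp add: sum.distrib)
    also have "\<dots> \<le> (\<Sum>i<K. \<delta> / (2 * (K+1)))"
      using nA(2) by (intro sum_mono) (simp add: less_imp_le)
    also have "\<dots> = K * (\<delta> / (2 * (K+1)))" by simp
    also have "\<dots> < \<delta>/2"
      using Union(3) by (simp add: field_simps)
    finally have "measure M ((\<Union>i. a i) - A) + measure M (A - (\<Union>i. a i)) < \<delta>"
      using e1 e2 K by linarith
    then show ?case using cA by blast
  qed
qed

definition bl :: "nat \<Rightarrow> (nat \<Rightarrow> nat) \<Rightarrow> (nat \<Rightarrow> nat) set" where
  "bl n p = {y \<in> seqT m. pre n y = p}"

lemma bl_pre: "bl n (pre n x) = adic_ball m n x"
  by (simp add: bl_def adic_ball_pre)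

lemma bl_sets: "bl n p \<in> sets M"
proof (cases "bl n p = {}")
  case True then show ?thesis by simp
next
  case False
  then obtain x where "x \<in> bl n p" by blast
  then have "bl n p = adic_ball m n x" using bl_pre[of n x] by (auto simp: bl_def)
  then show ?thesis using ball_sets by simp
qed

lemma sum_bl: assumes "finite P" "Z \<in> sets M"
  shows "measure M (\<Union>p\<in>P. bl n p \<inter> Z) = (\<Sum>p\<in>P. measure M (bl n p \<inter> Z))"
  using assms bl_sets by (intro finite_measure_finite_Union) (auto simp: disjoint_family_on_def bl_def)

lemma cyl_sum:
  assumes S: "cyl m n S" and Z: "Z \<in> sets M"
    and h: "\<And>x. x \<in> S \<Longrightarrow> c * measure M (adic_ball m n x) \<le> measure M (adic_ball m n x \<inter> Z)"
  shows "c * measure M S \<le> measure M (S \<inter> Z)"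
proof -
  have Ss: "S \<subseteq> seqT m" using S cyl_def by blast
  define P where "P = pre n ` S"
  have fP: "finite P" unfolding P_def using finite_pre Ss by (meson finite_subset image_mono)
  have SU: "S = (\<Union>p\<in>P. bl n p)"
  proof
    show "S \<subseteq> (\<Union>p\<in>P. bl n p)" using Ss unfolding P_def bl_def by blast
    show "(\<Union>p\<in>P. bl n p) \<subseteq> S"
      using S unfolding P_def cyl_def by (auto simp: bl_pre)
  qed
  have e1: "measure M S = (\<Sum>p\<in>P. measure M (bl n p))"
  proof -
    have "measure M (\<Union>p\<in>P. bl n p \<inter> space M) = (\<Sum>p\<in>P. measure M (bl n p \<inter> space M))"
      by (rule sum_bl[OF fP sets.top])
    moreover have "\<And>p. bl n p \<inter> space M = bl n p" using sp by (auto simp: bl_def)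
    ultimately show ?thesis using SU by simp
  qed
  have e2: "measure M (S \<inter> Z) = (\<Sum>p\<in>P. measure M (bl n p \<inter> Z))"
    using sum_bl[OF fP Z, of n] SU by simp
  have "c * measure M S = (\<Sum>p\<in>P. c * measure M (bl n p))"
    using e1 by (simp add: sum_distrib_left)
  also have "\<dots> \<le> (\<Sum>p\<in>P. measure M (bl n p \<inter> Z))"
  proof (rule sum_mono)
    fix p assume "p \<in> P"
    then obtain x where "x \<in> S" "p = pre n x" unfolding P_def by blast
    then show "c * measure M (bl n p) \<le> measure M (bl n p \<inter> Z)" using h bl_pre by simp
  qed
  finally show ?thesis using e2 by simp
qed

lemma density:
  assumes E: "E \<in> sets M" and Ep: "measure M E > 0" and eta: "\<eta> > 0"
  shows "\<exists>x\<in>E. eventually (\<lambda>n. measure M (adic_ball m n x - E) \<le> \<eta> * measure M (adic_ball m n x)) sequentially"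
proof (rule ccontr)
  assume "\<not> ?thesis"
  then have fr: "\<And>x. x \<in> E \<Longrightarrow> frequently (\<lambda>n. \<eta> * measure M (adic_ball m n x) < measure M (adic_ball m n x - E)) sequentially"
    by (auto simp: not_eventually not_le)
  define \<delta> where "\<delta> = measure M E * \<eta> / (2 * (1 + \<eta>))"
  have dpos: "\<delta> > 0" unfolding \<delta>_def using Ep eta by simp
  obtain K A where A: "cyl m K A" and err: "measure M (E - A) + measure M (A - E) < \<delta>"
    using approx[OF E dpos] by blast
  have As: "A \<in> sets M" using A cyl_sets by blast
  have Asub: "A \<subseteq> seqT m" using A cyl_def by blast
  define bad where "bad n x \<longleftrightarrow> K \<le> n \<and> \<eta> * measure M (adic_ball m n x) < measure M (adic_ball m n x - E)" for n x
  define S where "S n = {x \<in> A. bad n x \<and> (\<forall>k<n. \<not> bad k x)}" for n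
  have ballA: "adic_ball m n x \<subseteq> A" if "x \<in> A" "K \<le> n" for x n
    using A that ball_mono unfolding cyl_def by blast
  have cS: "cyl m n (S n)" for n
  proof (cases "K \<le> n")
    case False
    then have "S n = {}" unfolding S_def bad_def by auto
    then show ?thesis using cyl_empty by simp
  next
    case True
    show ?thesis unfolding cyl_def
    proof (intro conjI ballI subsetI)
      show "x \<in> seqT m" if "x \<in> S n" for x using that Asub unfolding S_def by blast
      fix x y assume x: "x \<in> S n" and y: "y \<in> adic_ball m n x"
      have xA: "x \<in> A" using x S_def by blast
      have yA: "y \<in> A" using ballA[OF xA True] y by blast
      have "adic_ball m k y = adic_ball m k x" if "k \<le> n" for k
        using ball_eq ball_mono that y by blast
      then have "bad k y = bad k x" if "k \<le> n" for k using that unfolding bad_def by simp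
      then show "y \<in> S n" using x yA unfolding S_def by auto
    qed
  qed
  have Ssets: "S n \<in> sets M" for n using cS cyl_sets by blast
  have disj: "disjoint_family S"
    unfolding disjoint_family_on_def S_def by (auto, metis linorder_neqE_nat)
  have cover: "E \<inter> A \<subseteq> (\<Union>n. S n)"
  proof
    fix x assume x: "x \<in> E \<inter> A"
    have "\<exists>n\<ge>K. \<eta> * measure M (adic_ball m n x) < measure M (adic_ball m n x - E)"
      using fr[of x] x unfolding frequently_sequentially by blast
    then have ex: "\<exists>n. bad n x" unfolding bad_def by blast
    define n0 where "n0 = (LEAST n. bad n x)"
    have "bad n0 x" unfolding n0_def using ex by (metis LeastI)
    moreover have "\<forall>k<n0. \<not> bad k x" unfolding n0_def using not_less_Least by blast
    ultimately have "x \<in> S n0" unfolding S_def using x by blast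
    then show "x \<in> (\<Union>n. S n)" by blast
  qed
  have AEs: "A - E \<in> sets M" using As E by blast
  have loc: "\<eta> * measure M (S n) \<le> measure M (S n \<inter> (A - E))" for n
  proof (rule cyl_sum[OF cS AEs])
    fix x assume x: "x \<in> S n"
    then have "x \<in> A" "bad n x" unfolding S_def by auto
    then have "adic_ball m n x \<subseteq> A" "K \<le> n" using ballA bad_def by auto
    then have "adic_ball m n x - E = adic_ball m n x \<inter> (A - E)" by blast
    then show "\<eta> * measure M (adic_ball m n x) \<le> measure M (adic_ball m n x \<inter> (A - E))"
      using \<open>bad n x\<close> unfolding bad_def by simp
  qed
  have s1: "(\<lambda>n. measure M (S n)) sums measure M (\<Union>n. S n)"
    using Ssets disj by (intro finite_measure_UNION) auto
  have s2: "(\<lambda>n. measure M (S n \<inter> (A - E))) sums measure M (\<Union>n. S n \<inter> (A - E))"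
    using Ssets disj AEs by (intro finite_measure_UNION) (auto simp: disjoint_family_on_def)
  have "\<eta> * measure M (\<Union>n. S n) \<le> measure M (\<Union>n. S n \<inter> (A - E))"
    using sums_le[OF loc sums_mult[OF s1] s2] .
  also have "\<dots> \<le> measure M (A - E)"
    using AEs by (intro finite_measure_mono) auto
  finally have u: "\<eta> * measure M (\<Union>n. S n) \<le> measure M (A - E)" .
  have "measure M E \<le> measure M ((E - A) \<union> (\<Union>n. S n))"
    using cover Ssets As E by (intro finite_measure_mono) blast+
  also have "\<dots> \<le> measure M (E - A) + measure M (\<Union>n. S n)"
    using Ssets As E by (intro measure_Un_le) blast+
  finally have "measure M E \<le> measure M (E - A) + measure M (\<Union>n. S n)" .
  moreover have "measure M (\<Union>n. S n) \<le> measure M (A - E) / \<eta>"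
    using u eta by (simp add: field_simps)
  moreover have "measure M (E - A) + measure M (A - E) / \<eta> \<le> (1 + 1/\<eta>) * (measure M (E - A) + measure M (A - E))"
    using eta by (simp add: field_simps)
  moreover have "(1 + 1/\<eta>) * (measure M (E - A) + measure M (A - E)) < (1 + 1/\<eta>) * \<delta>"
    using err eta by (intro mult_strict_left_mono) (auto simp: add_pos_pos)
  moreover have "(1 + 1/\<eta>) * \<delta> = measure M E / 2"
    unfolding \<delta>_def using eta by (rule aux)
  ultimately show False using Ep by linarith
qed

lemma cyl_measurable:
  assumes "space N = UNIV" and g: "\<And>x y. pre n x = pre n y \<Longrightarrow> g x = g y"
  shows "g \<in> measurable M N"
proof (rule measurableI)
  show "g x \<in> space N" for x using assms(1) by simp
  fix A assume "A \<in> sets N"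
  have "cyl m n (g -` A \<inter> space M)" unfolding cyl_def sp
  proof
    show "g -` A \<inter> seqT m \<subseteq> seqT m" by blast
    show "\<forall>x\<in>g -` A \<inter> seqT m. adic_ball m n x \<subseteq> g -` A \<inter> seqT m"
    proof (intro ballI subsetI)
      fix x y assume x: "x \<in> g -` A \<inter> seqT m" and y: "y \<in> adic_ball m n x"
      have "pre n y = pre n x" using y by (simp add: adic_ball_pre)
      then have "g y = g x" by (rule g)
      moreover have "y \<in> seqT m" using y ball_sub by blast
      ultimately show "y \<in> g -` A \<inter> seqT m" using x by simp
    qed
  qed
  then show "g -` A \<inter> space M \<in> sets M" using cyl_sets by blast
qed

lemma fd_measurable[measurable]: "(\<lambda>x. fd m M \<alpha> n x) \<in> borel_measurable M"
  by (rule cyl_measurable[of _ n]) (auto simp: fd_def adic_ball_pre)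

lemma sum_bl': assumes "finite P"
  shows "measure M (\<Union>p\<in>P. bl n p) = (\<Sum>p\<in>P. measure M (bl n p))"
proof -
  have "measure M (\<Union>p\<in>P. bl n p \<inter> space M) = (\<Sum>p\<in>P. measure M (bl n p \<inter> space M))"
    by (rule sum_bl[OF assms sets.top])
  moreover have "\<And>p. bl n p \<inter> space M = bl n p" using sp by (auto simp: bl_def)
  ultimately show ?thesis by simp
qed

lemma core:
  assumes E: "E \<in> sets M" "measure M E > 0" and eta: "0 < \<eta>" "\<eta> \<le> 1"
    and fr: "\<And>x. x \<in> E \<Longrightarrow> frequently (\<lambda>n. a \<le> fd m M \<alpha> n x \<and> fd m M \<alpha> n x \<le> b) sequentially"
    and un: "\<And>y n. y \<in> E \<Longrightarrow> N \<le> n \<Longrightarrow> lo \<le> fd m M \<alpha> n y \<and> fd m M \<alpha> n y \<le> hi"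
  shows "\<exists>k::nat. k * lo \<le> real m powr (\<alpha> * real i) * b \<and> (1 - \<eta>) * real m powr (\<alpha> * real i) * a \<le> k * hi"
proof -
  define r where "r = real m powr (\<alpha> * real i)"
  obtain x where xE: "x \<in> E" and ev: "eventually (\<lambda>n. measure M (adic_ball m n x - E) \<le> \<eta> * measure M (adic_ball m n x)) sequentially"
    using density[OF E eta(1)] by blast
  have "frequently (\<lambda>n. (a \<le> fd m M \<alpha> n x \<and> fd m M \<alpha> n x \<le> b) \<and> (measure M (adic_ball m n x - E) \<le> \<eta> * measure M (adic_ball m n x) \<and> N \<le> n)) sequentially"
    using frequently_eventually_frequently[OF fr[OF xE] eventually_conj[OF ev eventually_ge_at_top[of N]]] .
  then obtain n where "(a \<le> fd m M \<alpha> n x \<and> fd m M \<alpha> n x \<le> b) \<and> (measure M (adic_ball m n x - E) \<le> \<eta> * measure M (adic_ball m n x) \<and> N \<le> n)"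
    by (metis (no_types, lifting) frequently_ex)
  then have nab: "a \<le> fd m M \<alpha> n x" "fd m M \<alpha> n x \<le> b"
    and nd: "measure M (adic_ball m n x - E) \<le> \<eta> * measure M (adic_ball m n x)" and nN: "N \<le> n"
    by blast+
  define Bn where "Bn = adic_ball m n x"
  define CH where "CH = pre (n + i) ` (Bn \<inter> E)"
  define R where "R = real m powr (\<alpha> * real (n + i))"
  have R: "R = real m powr (\<alpha> * real n) * r" unfolding R_def r_def
    by (simp add: distrib_left powr_add)
  have Rpos: "R \<ge> 0" "r \<ge> 0" unfolding R_def r_def by auto
  have Esub: "E \<subseteq> seqT m" using E sets_sub by blast
  have fCH: "finite CH" unfolding CH_def using finite_pre Esub by (meson finite_subset image_mono inf_le2 subset_trans)
  define W where "W = (\<Union>p\<in>CH. bl (n + i) p)"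
  have mW: "measure M W = (\<Sum>p\<in>CH. measure M (bl (n + i) p))" unfolding W_def by (rule sum_bl'[OF fCH])
  have chb: "\<exists>y\<in>Bn \<inter> E. bl (n + i) p = adic_ball m (n + i) y" if "p \<in> CH" for p
    using that bl_pre unfolding CH_def by blast
  have WB: "W \<subseteq> Bn"
  proof
    fix z assume "z \<in> W"
    then obtain p where p: "p \<in> CH" "z \<in> bl (n + i) p" unfolding W_def by blast
    then obtain y where y: "y \<in> Bn \<inter> E" "bl (n + i) p = adic_ball m (n + i) y" using chb by blast
    then have "z \<in> adic_ball m n y" using p ball_mono[of n "n+i" m y] by auto
    then show "z \<in> Bn" using y ball_eq unfolding Bn_def by blast
  qed
  have BEW: "Bn \<inter> E \<subseteq> W"
  proof
    fix y assume y: "y \<in> Bn \<inter> E"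
    then have "y \<in> bl (n + i) (pre (n + i) y)" using Esub by (auto simp: bl_def)
    then show "y \<in> W" unfolding W_def CH_def using y by blast
  qed
  have Bns: "Bn \<in> sets M" unfolding Bn_def by (rule ball_sets)
  have Ws: "W \<in> sets M" unfolding W_def using fCH bl_sets by blast
  have chbd: "lo \<le> R * measure M (bl (n + i) p) \<and> R * measure M (bl (n + i) p) \<le> hi" if pCH: "p \<in> CH" for p
  proof -
    obtain y where "y \<in> Bn \<inter> E" "bl (n + i) p = adic_ball m (n + i) y" using chb[OF pCH] by blast
    then show ?thesis using un[of y "n + i"] nN unfolding fd_def R_def by auto
  qed
  have fdx: "fd m M \<alpha> n x = real m powr (\<alpha> * real n) * measure M Bn" unfolding fd_def Bn_def by simp
  define k where "k = card CH"
  have s1: "real k * lo = (\<Sum>p\<in>CH. lo)" unfolding k_def by simp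
  have s2: "real k * hi = (\<Sum>p\<in>CH. hi)" unfolding k_def by simp
  have RW: "R * measure M W = (\<Sum>p\<in>CH. R * measure M (bl (n + i) p))" by (simp add: mW sum_distrib_left)
  have "real k * lo \<le> R * measure M W" unfolding s1 RW by (intro sum_mono) (use chbd in auto)
  also have "\<dots> \<le> R * measure M Bn" using WB Bns Rpos by (intro mult_left_mono finite_measure_mono) auto
  also have "\<dots> = r * fd m M \<alpha> n x" unfolding fdx R by simp
  also have "\<dots> \<le> r * b" using nab Rpos by (intro mult_left_mono) auto
  finally have c1: "real k * lo \<le> r * b" .
  have "measure M Bn = measure M (Bn \<inter> E) + measure M (Bn - E)"
    using finite_measure_Diff'[OF Bns E(1)] by simp
  then have "(1 - \<eta>) * measure M Bn \<le> measure M (Bn \<inter> E)"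
    using nd unfolding Bn_def by (simp add: algebra_simps)
  also have "\<dots> \<le> measure M W" using BEW Ws by (intro finite_measure_mono) auto
  finally have mB: "(1 - \<eta>) * measure M Bn \<le> measure M W" .
  have "(1 - \<eta>) * r * a \<le> (1 - \<eta>) * r * fd m M \<alpha> n x"
    using nab Rpos eta by (intro mult_left_mono) auto
  also have "\<dots> = R * ((1 - \<eta>) * measure M Bn)" unfolding fdx R by simp
  also have "\<dots> \<le> R * measure M W" using mB Rpos by (intro mult_left_mono) auto
  also have "\<dots> \<le> real k * hi" unfolding s2 RW by (intro sum_mono) (use chbd in auto)
  finally have c2: "(1 - \<eta>) * r * a \<le> real k * hi" .
  show ?thesis using c1 c2 unfolding r_def by blast
qed

lemma ud_fd: "upper_density m M \<alpha> x = limsup (\<lambda>n. ereal (fd m M \<alpha> n x))"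
  by (simp add: upper_density_def fd_def)
lemma ld_fd: "lower_density m M \<alpha> x = liminf (\<lambda>n. ereal (fd m M \<alpha> n x))"
  by (simp add: lower_density_def fd_def)

lemma ud_meas[measurable]: "(\<lambda>x. upper_density m M \<alpha> x) \<in> borel_measurable M"
  unfolding ud_fd by (rule borel_measurable_limsup) simp
lemma ld_meas[measurable]: "(\<lambda>x. lower_density m M \<alpha> x) \<in> borel_measurable M"
  unfolding ld_fd by (rule borel_measurable_liminf) simp

lemma ld_le_ud: "lower_density m M \<alpha> x \<le> upper_density m M \<alpha> x"
  unfolding ud_fd ld_fd by (rule Liminf_le_Limsup) simp

definition GP :: "real \<Rightarrow> real \<Rightarrow> (nat \<Rightarrow> nat) \<Rightarrow> bool" where
  "GP \<alpha> c x \<longleftrightarrow> upper_density m M \<alpha> x < \<infinity> \<and> 0 < lower_density m M \<alpha> x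
     \<and> upper_density m M \<alpha> x \<le> ereal c * lower_density m M \<alpha> x"

lemma GP_meas[measurable]: "Measurable.pred M (GP \<alpha> c)"
proof -
  have 1: "(\<lambda>x. ereal c * lower_density m M \<alpha> x) \<in> borel_measurable M"
    by (rule borel_measurable_ereal_times) auto
  have [measurable]: "Measurable.pred M (\<lambda>x. upper_density m M \<alpha> x \<le> ereal c * lower_density m M \<alpha> x)"
    unfolding pred_def by (rule borel_measurable_le[OF ud_meas 1])
  show ?thesis unfolding GP_def by measurable
qed

lemma GP_facts:
  assumes "GP \<alpha> c x"
  defines "l \<equiv> real_of_ereal (lower_density m M \<alpha> x)" and "u \<equiv> real_of_ereal (upper_density m M \<alpha> x)"
  shows "lower_density m M \<alpha> x = ereal l" "upper_density m M \<alpha> x = ereal u"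
    "0 < l" "l \<le> u" "u \<le> c * l" "0 < c"
proof -
  have h: "upper_density m M \<alpha> x < \<infinity>" "0 < lower_density m M \<alpha> x"
    "upper_density m M \<alpha> x \<le> ereal c * lower_density m M \<alpha> x"
    using assms(1) unfolding GP_def by auto
  have le: "lower_density m M \<alpha> x \<le> upper_density m M \<alpha> x" by (rule ld_le_ud)
  show L: "lower_density m M \<alpha> x = ereal l" unfolding l_def using h le
    by (cases "lower_density m M \<alpha> x") auto
  show U: "upper_density m M \<alpha> x = ereal u" unfolding u_def using h le
    by (cases "upper_density m M \<alpha> x") auto
  show "0 < l" using h(2) L by simp
  show "l \<le> u" using le L U by simp
  show "u \<le> c * l" using h(3) L U by simp
  then have "0 < c * l" using \<open>0 < l\<close> \<open>l \<le> u\<close> by linarith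
  then show "0 < c" using \<open>0 < l\<close> by (simp add: zero_less_mult_iff)
qed

lemma E_meas:
  fixes \<phi> :: "(nat \<Rightarrow> nat) \<Rightarrow> real"
  assumes phim: "\<phi> \<in> borel_measurable M"
  shows "{x \<in> space M. GP \<alpha> c x \<and> q \<le> \<phi> x \<and> \<phi> x < q * (1 + \<epsilon>) \<and>
      (\<forall>n. N \<le> n \<longrightarrow> real_of_ereal (lower_density m M \<alpha> x) * (1 - \<epsilon>) \<le> fd m M \<alpha> n x \<and>
                         fd m M \<alpha> n x \<le> real_of_ereal (upper_density m M \<alpha> x) * (1 + \<epsilon>))} \<in> sets M"
proof -
  let ?l = "\<lambda>x. real_of_ereal (lower_density m M \<alpha> x) * (1 - \<epsilon>)"
  let ?u = "\<lambda>x. real_of_ereal (upper_density m M \<alpha> x) * (1 + \<epsilon>)"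
  have lm: "?l \<in> borel_measurable M"
    by (intro borel_measurable_times borel_measurable_const borel_measurable_real_of_ereal ld_meas)
  have um: "?u \<in> borel_measurable M"
    by (intro borel_measurable_times borel_measurable_const borel_measurable_real_of_ereal ud_meas)
  have S1: "{x \<in> space M. GP \<alpha> c x} \<in> sets M" using GP_meas[of \<alpha> c] unfolding pred_def .
  have S2: "{x \<in> space M. q \<le> \<phi> x} \<in> sets M"
    by (rule borel_measurable_le[OF borel_measurable_const phim])
  have S3: "{x \<in> space M. \<phi> x < q * (1 + \<epsilon>)} \<in> sets M"
    by (rule borel_measurable_less[OF phim borel_measurable_const])
  have S4: "{x \<in> space M. ?l x \<le> fd m M \<alpha> n x} \<in> sets M" for n
    by (rule borel_measurable_le[OF lm fd_measurable])
  have S5: "{x \<in> space M. fd m M \<alpha> n x \<le> ?u x} \<in> sets M" for n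
    by (rule borel_measurable_le[OF fd_measurable um])
  have S45: "(\<Inter>n\<in>{N..}. {x \<in> space M. ?l x \<le> fd m M \<alpha> n x} \<inter> {x \<in> space M. fd m M \<alpha> n x \<le> ?u x}) \<in> sets M"
    using S4 S5 by (intro sets.countable_INT') auto
  have eq: "{x \<in> space M. GP \<alpha> c x \<and> q \<le> \<phi> x \<and> \<phi> x < q * (1 + \<epsilon>) \<and>
      (\<forall>n. N \<le> n \<longrightarrow> ?l x \<le> fd m M \<alpha> n x \<and> fd m M \<alpha> n x \<le> ?u x)}
    = {x \<in> space M. GP \<alpha> c x} \<inter> {x \<in> space M. q \<le> \<phi> x} \<inter> {x \<in> space M. \<phi> x < q * (1 + \<epsilon>)} \<inter>
      (\<Inter>n\<in>{N..}. {x \<in> space M. ?l x \<le> fd m M \<alpha> n x} \<inter> {x \<in> space M. fd m M \<alpha> n x \<le> ?u x})"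
    by blast
  show ?thesis unfolding eq using S1 S2 S3 S45 by blast
qed

lemma window:
  fixes \<phi> :: "(nat \<Rightarrow> nat) \<Rightarrow> real"
  assumes AE: "AE x in M. GP \<alpha> c x" and sp0: "emeasure M (space M) \<noteq> 0"
    and eps: "0 < \<epsilon>"
    and phim[measurable]: "\<phi> \<in> borel_measurable M"
    and phipos: "\<And>x. GP \<alpha> c x \<Longrightarrow> 0 < \<phi> x"
  shows "\<exists>N q. 0 < q \<and> 0 < measure M {x \<in> space M. GP \<alpha> c x \<and> q \<le> \<phi> x \<and> \<phi> x < q * (1 + \<epsilon>) \<and>
      (\<forall>n. N \<le> n \<longrightarrow> real_of_ereal (lower_density m M \<alpha> x) * (1 - \<epsilon>) \<le> fd m M \<alpha> n x \<and>
                         fd m M \<alpha> n x \<le> real_of_ereal (upper_density m M \<alpha> x) * (1 + \<epsilon>))}"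
proof (rule ccontr)
  define E where "E N q = {x \<in> space M. GP \<alpha> c x \<and> q \<le> \<phi> x \<and> \<phi> x < q * (1 + \<epsilon>) \<and>
      (\<forall>n. N \<le> n \<longrightarrow> real_of_ereal (lower_density m M \<alpha> x) * (1 - \<epsilon>) \<le> fd m M \<alpha> n x \<and>
                         fd m M \<alpha> n x \<le> real_of_ereal (upper_density m M \<alpha> x) * (1 + \<epsilon>))}" for N q
  have Es: "E N q \<in> sets M" for N q unfolding E_def by (rule E_meas[OF phim])
  assume "\<not> ?thesis"
  note nt = this
  have z: "measure M (E N q) = 0" if "0 < q" for N q
  proof -
    have "\<not> (0 < measure M (E N q))" using nt that unfolding E_def by blast
    then show ?thesis using measure_nonneg[of M "E N q"] by linarith
  qed
  have "AE x in M. x \<notin> E N (real_of_rat q)" if "0 < real_of_rat q" for N q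
    using z[OF that, of N] Es by (intro AE_not_in) (auto simp: emeasure_eq_measure null_sets_def)
  then have "AE x in M. \<forall>N q. 0 < real_of_rat q \<longrightarrow> x \<notin> E N (real_of_rat q)"
    by (auto simp: AE_all_countable)
  then have "AE x in M. False" using AE AE_space
  proof eventually_elim
    case (elim x)
    have xs: "x \<in> space M" and gp: "GP \<alpha> c x" using elim by auto
    note F = GP_facts[OF gp]
    define l where "l = real_of_ereal (lower_density m M \<alpha> x)"
    define u where "u = real_of_ereal (upper_density m M \<alpha> x)"
    have L: "liminf (\<lambda>n. ereal (fd m M \<alpha> n x)) = ereal l" using F(1) unfolding l_def ld_fd .
    have U: "limsup (\<lambda>n. ereal (fd m M \<alpha> n x)) = ereal u" using F(2) unfolding u_def ud_fd .
    have lpos: "0 < l" using F(3) unfolding l_def .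
    have upos: "0 < u" using F(3,4) unfolding l_def u_def by linarith
    have ph: "0 < \<phi> x" using phipos[OF gp] .
    have "\<phi> x / (1 + \<epsilon>) < \<phi> x" using ph eps by (simp add: divide_less_eq)
    then obtain r where r: "r \<in> \<rat>" "\<phi> x / (1 + \<epsilon>) < r" "r < \<phi> x" using Rats_dense_in_real by blast
    then obtain q where q: "r = real_of_rat q" by (auto simp: Rats_def)
    have rpos: "0 < r" using r(2) ph eps by (smt (verit) divide_pos_pos)
    have r2: "\<phi> x < r * (1 + \<epsilon>)" using r(2) eps by (simp add: divide_less_eq mult.commute)
    have "ereal (l * (1 - \<epsilon>)) < liminf (\<lambda>n. ereal (fd m M \<alpha> n x))" unfolding L using lpos eps by simp
    then have e1: "eventually (\<lambda>n. ereal (l * (1 - \<epsilon>)) < ereal (fd m M \<alpha> n x)) sequentially"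
      by (rule less_LiminfD)
    have "ereal (u * (1 + \<epsilon>)) > limsup (\<lambda>n. ereal (fd m M \<alpha> n x))" unfolding U using upos eps by simp
    then have e2: "eventually (\<lambda>n. ereal (fd m M \<alpha> n x) < ereal (u * (1 + \<epsilon>))) sequentially"
      by (rule Limsup_lessD)
    obtain N where N: "\<And>n. N \<le> n \<Longrightarrow> ereal (l * (1 - \<epsilon>)) < ereal (fd m M \<alpha> n x) \<and> ereal (fd m M \<alpha> n x) < ereal (u * (1 + \<epsilon>))"
      using eventually_conj[OF e1 e2] unfolding eventually_sequentially by blast
    have Nb: "l * (1 - \<epsilon>) \<le> fd m M \<alpha> n x \<and> fd m M \<alpha> n x \<le> u * (1 + \<epsilon>)" if "N \<le> n" for n
    proof -
      have "l * (1 - \<epsilon>) < fd m M \<alpha> n x" "fd m M \<alpha> n x < u * (1 + \<epsilon>)" using N[OF that] by simp_all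
      then show ?thesis by simp
    qed
    have mem: "x \<in> E N r \<longleftrightarrow> x \<in> space M \<and> GP \<alpha> c x \<and> r \<le> \<phi> x \<and> \<phi> x < r * (1 + \<epsilon>) \<and>
       (\<forall>n. N \<le> n \<longrightarrow> l * (1 - \<epsilon>) \<le> fd m M \<alpha> n x \<and> fd m M \<alpha> n x \<le> u * (1 + \<epsilon>))"
      unfolding E_def l_def u_def by simp
    have "x \<in> E N r" unfolding mem using xs gp r(3) r2 Nb by (simp add: less_imp_le)
    then show False using elim rpos q by auto
  qed
  then show False using sp0 ae_filter_eq_bot_iff[of M] by (simp add: trivial_limit_def)
qed

lemma winA:
  assumes AE: "AE x in M. GP \<alpha> c x" and sp0: "emeasure M (space M) \<noteq> 0"
    and eps: "0 < \<epsilon>" "\<epsilon> < 1"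
  shows "\<exists>k::nat. k * (1 - \<epsilon>) \<le> real m powr (\<alpha> * real i) * (1 + \<epsilon>)^2 \<and>
     (1 - \<epsilon>) * real m powr (\<alpha> * real i) * (1 - \<epsilon>) \<le> k * (c * (1 + \<epsilon>)^2)"
proof -
  define r where "r = real m powr (\<alpha> * real i)"
  let ?l = "\<lambda>x. real_of_ereal (lower_density m M \<alpha> x)"
  let ?u = "\<lambda>x. real_of_ereal (upper_density m M \<alpha> x)"
  have phim: "?l \<in> borel_measurable M" by measurable
  obtain N q where q: "0 < q" and Ep: "0 < measure M {x \<in> space M. GP \<alpha> c x \<and> q \<le> ?l x \<and> ?l x < q * (1 + \<epsilon>) \<and>
      (\<forall>n. N \<le> n \<longrightarrow> ?l x * (1 - \<epsilon>) \<le> fd m M \<alpha> n x \<and> fd m M \<alpha> n x \<le> ?u x * (1 + \<epsilon>))}"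
    using window[OF AE sp0 eps(1) phim] GP_facts(3) by blast
  define E where "E = {x \<in> space M. GP \<alpha> c x \<and> q \<le> ?l x \<and> ?l x < q * (1 + \<epsilon>) \<and>
      (\<forall>n. N \<le> n \<longrightarrow> ?l x * (1 - \<epsilon>) \<le> fd m M \<alpha> n x \<and> fd m M \<alpha> n x \<le> ?u x * (1 + \<epsilon>))}"
  have Es: "E \<in> sets M" unfolding E_def by (rule E_meas[OF phim])
  have Ep': "0 < measure M E" using Ep unfolding E_def .
  have un: "q * (1 - \<epsilon>) \<le> fd m M \<alpha> n y \<and> fd m M \<alpha> n y \<le> c * q * (1 + \<epsilon>)^2" if y: "y \<in> E" "N \<le> n" for y n
  proof -
    have gp: "GP \<alpha> c y" and yq: "q \<le> ?l y" "?l y < q * (1 + \<epsilon>)"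
      and b: "?l y * (1 - \<epsilon>) \<le> fd m M \<alpha> n y" "fd m M \<alpha> n y \<le> ?u y * (1 + \<epsilon>)"
      using y unfolding E_def by auto
    note F = GP_facts[OF gp]
    have "q * (1 - \<epsilon>) \<le> ?l y * (1 - \<epsilon>)" using yq eps by (intro mult_right_mono) auto
    moreover have "?u y * (1 + \<epsilon>) \<le> c * ?l y * (1 + \<epsilon>)" using F(5) eps by (intro mult_right_mono) auto
    moreover have "c * ?l y * (1 + \<epsilon>) \<le> c * (q * (1 + \<epsilon>)) * (1 + \<epsilon>)"
      using yq F(6) eps by (intro mult_right_mono mult_left_mono) auto
    ultimately show ?thesis using b by (simp add: power2_eq_square algebra_simps)
  qed
  have fr: "frequently (\<lambda>n. q * (1 - \<epsilon>) \<le> fd m M \<alpha> n x \<and> fd m M \<alpha> n x \<le> q * (1 + \<epsilon>)^2) sequentially"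
    if x: "x \<in> E" for x
  proof -
    have gp: "GP \<alpha> c x" and xq: "q \<le> ?l x" "?l x < q * (1 + \<epsilon>)"
      using x unfolding E_def by auto
    note F = GP_facts[OF gp]
    have "frequently (\<lambda>n. fd m M \<alpha> n x \<le> ?l x * (1 + \<epsilon>)) sequentially"
    proof (rule ccontr)
      assume "\<not> ?thesis"
      then have "eventually (\<lambda>n. ereal (?l x * (1 + \<epsilon>)) \<le> ereal (fd m M \<alpha> n x)) sequentially"
        by (auto simp: not_frequently elim: eventually_mono)
      then have "ereal (?l x * (1 + \<epsilon>)) \<le> lower_density m M \<alpha> x"
        unfolding ld_fd by (rule Liminf_bounded)
      then have "?l x * (1 + \<epsilon>) \<le> ?l x" by (metis F(1) ereal_less_eq(3))
      moreover have "0 < ?l x * \<epsilon>" using F(3) eps by simp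
      ultimately show False by (simp add: distrib_left)
    qed
    then have "frequently (\<lambda>n. fd m M \<alpha> n x \<le> ?l x * (1 + \<epsilon>) \<and> N \<le> n) sequentially"
      using eventually_ge_at_top[of N] by (rule frequently_eventually_frequently)
    then show ?thesis
    proof (rule frequently_elim1)
      fix n assume n: "fd m M \<alpha> n x \<le> ?l x * (1 + \<epsilon>) \<and> N \<le> n"
      have "?l x * (1 + \<epsilon>) \<le> q * (1 + \<epsilon>) * (1 + \<epsilon>)" using xq eps by (intro mult_right_mono) auto
      then show "q * (1 - \<epsilon>) \<le> fd m M \<alpha> n x \<and> fd m M \<alpha> n x \<le> q * (1 + \<epsilon>)^2"
        using n un[OF x, of n] by (simp add: power2_eq_square)
    qed
  qed
  obtain k :: nat where k1: "k * (q * (1 - \<epsilon>)) \<le> r * (q * (1 + \<epsilon>)^2)"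
    and k2: "(1 - \<epsilon>) * r * (q * (1 - \<epsilon>)) \<le> k * (c * q * (1 + \<epsilon>)^2)"
    using core[OF Es Ep' eps(1) _ fr, of N "q * (1 - \<epsilon>)" "c * q * (1 + \<epsilon>)^2" i] un eps unfolding r_def by force
  have "q * (k * (1 - \<epsilon>)) \<le> q * (r * (1 + \<epsilon>)^2)" using k1 by (simp add: algebra_simps)
  then have 1: "k * (1 - \<epsilon>) \<le> r * (1 + \<epsilon>)^2" using q by simp
  have "q * ((1 - \<epsilon>) * r * (1 - \<epsilon>)) \<le> q * (k * (c * (1 + \<epsilon>)^2))" using k2 by (simp add: algebra_simps)
  then have 2: "(1 - \<epsilon>) * r * (1 - \<epsilon>) \<le> k * (c * (1 + \<epsilon>)^2)" using q by simp
  show ?thesis using 1 2 unfolding r_def by blast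
qed

lemma winB:
  assumes AE: "AE x in M. GP \<alpha> c x" and sp0: "emeasure M (space M) \<noteq> 0"
    and eps: "0 < \<epsilon>" "\<epsilon> < 1"
  shows "\<exists>k::nat. k * (1 - \<epsilon>) \<le> c * real m powr (\<alpha> * real i) * (1 + \<epsilon>)^2 \<and>
     (1 - \<epsilon>) * real m powr (\<alpha> * real i) * (1 - \<epsilon>) \<le> k * (1 + \<epsilon>)^2"
proof -
  define r where "r = real m powr (\<alpha> * real i)"
  let ?l = "\<lambda>x. real_of_ereal (lower_density m M \<alpha> x)"
  let ?u = "\<lambda>x. real_of_ereal (upper_density m M \<alpha> x)"
  have phim: "?u \<in> borel_measurable M" by measurable
  have phipos: "0 < ?u x" if "GP \<alpha> c x" for x using GP_facts(3,4)[OF that] by linarith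
  obtain N q where q: "0 < q" and Ep: "0 < measure M {x \<in> space M. GP \<alpha> c x \<and> q \<le> ?u x \<and> ?u x < q * (1 + \<epsilon>) \<and>
      (\<forall>n. N \<le> n \<longrightarrow> ?l x * (1 - \<epsilon>) \<le> fd m M \<alpha> n x \<and> fd m M \<alpha> n x \<le> ?u x * (1 + \<epsilon>))}"
    using window[OF AE sp0 eps(1) phim phipos] by blast
  define E where "E = {x \<in> space M. GP \<alpha> c x \<and> q \<le> ?u x \<and> ?u x < q * (1 + \<epsilon>) \<and>
      (\<forall>n. N \<le> n \<longrightarrow> ?l x * (1 - \<epsilon>) \<le> fd m M \<alpha> n x \<and> fd m M \<alpha> n x \<le> ?u x * (1 + \<epsilon>))}"
  have Es: "E \<in> sets M" unfolding E_def by (rule E_meas[OF phim])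
  have Ep': "0 < measure M E" using Ep unfolding E_def .
  have cpos: "0 < c" if "x \<in> E" for x using that GP_facts(6) unfolding E_def by blast
  have un: "q * (1 - \<epsilon>) / c \<le> fd m M \<alpha> n y \<and> fd m M \<alpha> n y \<le> q * (1 + \<epsilon>)^2" if y: "y \<in> E" "N \<le> n" for y n
  proof -
    have gp: "GP \<alpha> c y" and yq: "q \<le> ?u y" "?u y < q * (1 + \<epsilon>)"
      and b: "?l y * (1 - \<epsilon>) \<le> fd m M \<alpha> n y" "fd m M \<alpha> n y \<le> ?u y * (1 + \<epsilon>)"
      using y unfolding E_def by auto
    note F = GP_facts[OF gp]
    have "q / c \<le> ?l y" using yq(1) F(5,6) by (simp add: divide_le_eq mult.commute)
    then have "q / c * (1 - \<epsilon>) \<le> ?l y * (1 - \<epsilon>)" using eps by (intro mult_right_mono) auto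
    moreover have "?u y * (1 + \<epsilon>) \<le> q * (1 + \<epsilon>) * (1 + \<epsilon>)" using yq eps by (intro mult_right_mono) auto
    ultimately show ?thesis using b by (simp add: power2_eq_square algebra_simps)
  qed
  have fr: "frequently (\<lambda>n. q * (1 - \<epsilon>) \<le> fd m M \<alpha> n x \<and> fd m M \<alpha> n x \<le> q * (1 + \<epsilon>)^2) sequentially"
    if x: "x \<in> E" for x
  proof -
    have gp: "GP \<alpha> c x" and xq: "q \<le> ?u x" "?u x < q * (1 + \<epsilon>)"
      using x unfolding E_def by auto
    note F = GP_facts[OF gp]
    have upos: "0 < ?u x" using F(3,4) by linarith
    have "frequently (\<lambda>n. ?u x * (1 - \<epsilon>) \<le> fd m M \<alpha> n x) sequentially"
    proof (rule ccontr)
      assume "\<not> ?thesis"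
      then have "eventually (\<lambda>n. ereal (fd m M \<alpha> n x) \<le> ereal (?u x * (1 - \<epsilon>))) sequentially"
        by (auto simp: not_frequently elim: eventually_mono)
      then have "upper_density m M \<alpha> x \<le> ereal (?u x * (1 - \<epsilon>))"
        unfolding ud_fd by (rule Limsup_bounded)
      then have "?u x \<le> ?u x * (1 - \<epsilon>)" by (metis F(2) ereal_less_eq(3))
      moreover have "0 < ?u x * \<epsilon>" using upos eps by simp
      ultimately show False by (simp add: right_diff_distrib)
    qed
    then have "frequently (\<lambda>n. ?u x * (1 - \<epsilon>) \<le> fd m M \<alpha> n x \<and> N \<le> n) sequentially"
      using eventually_ge_at_top[of N] by (rule frequently_eventually_frequently)
    then show ?thesis
    proof (rule frequently_elim1)
      fix n assume n: "?u x * (1 - \<epsilon>) \<le> fd m M \<alpha> n x \<and> N \<le> n"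
      have "q * (1 - \<epsilon>) \<le> ?u x * (1 - \<epsilon>)" using xq eps by (intro mult_right_mono) auto
      then show "q * (1 - \<epsilon>) \<le> fd m M \<alpha> n x \<and> fd m M \<alpha> n x \<le> q * (1 + \<epsilon>)^2"
        using n un[OF x, of n] by simp
    qed
  qed
  obtain k :: nat where k1: "k * (q * (1 - \<epsilon>) / c) \<le> r * (q * (1 + \<epsilon>)^2)"
    and k2: "(1 - \<epsilon>) * r * (q * (1 - \<epsilon>)) \<le> k * (q * (1 + \<epsilon>)^2)"
    using core[OF Es Ep' eps(1) _ fr, of N "q * (1 - \<epsilon>) / c" "q * (1 + \<epsilon>)^2" i] un eps unfolding r_def by force
  have c: "0 < c" using Ep' cpos by (metis equals0I measure_empty less_irrefl)
  have e1: "k * (q * (1 - \<epsilon>) / c) = (q / c) * (k * (1 - \<epsilon>))" by simp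
  have e2: "r * (q * (1 + \<epsilon>)^2) = (q / c) * (c * r * (1 + \<epsilon>)^2)" using c by simp
  have "(q / c) * (k * (1 - \<epsilon>)) \<le> (q / c) * (c * r * (1 + \<epsilon>)^2)" using k1 unfolding e1 e2 .
  moreover have qc: "0 < q / c" using q c by simp
  ultimately have 1: "k * (1 - \<epsilon>) \<le> c * r * (1 + \<epsilon>)^2" using mult_le_cancel_left_pos[OF qc] by blast
  have "q * ((1 - \<epsilon>) * r * (1 - \<epsilon>)) \<le> q * (k * (1 + \<epsilon>)^2)" using k2 by (simp add: algebra_simps)
  then have 2: "(1 - \<epsilon>) * r * (1 - \<epsilon>) \<le> k * (1 + \<epsilon>)^2" using q by simp
  show ?thesis using 1 2 unfolding r_def by blast
qed

end

theorem theorem1: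
  fixes m :: nat and \<alpha> :: real and \<mu> :: "(nat \<Rightarrow> nat) measure"
  assumes "m \<ge> 2"
    and "0 < \<alpha>" and "\<alpha> < 1"
    and "space \<mu> = seqT m" and "sets \<mu> = borelT m"
    and "emeasure \<mu> (space \<mu>) < \<infinity>" and "emeasure \<mu> (space \<mu>) \<noteq> 0"
    and "AE x in \<mu>. upper_density m \<mu> \<alpha> x < \<infinity> \<and> lower_density m \<mu> \<alpha> x > 0"
  shows "C_loc m \<mu> \<alpha> \<ge>
    (SUP ij \<in> {1..} \<times> {1..}.
       ereal (max (real m powr (\<alpha> * real (fst ij)) / real_of_int \<lfloor>real m powr (\<alpha> * real (fst ij))\<rfloor>)
                  (real_of_int \<lceil>real m powr (\<alpha> * real (snd ij))\<rceil> / real m powr (\<alpha> * real (snd ij)))))"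
proof -
  have fin: "finite_measure \<mu>" using assms(6) by (intro finite_measureI) auto
  interpret T: tree \<mu> m using fin assms(4,5) by (intro tree.intro tree_axioms.intro) auto
  define C where "C = C_loc m \<mu> \<alpha>"
  have AEC: "AE x in \<mu>. upper_density m \<mu> \<alpha> x / lower_density m \<mu> \<alpha> x \<le> C"
    unfolding C_def C_loc_def by (rule esssup_AE)
  have AE3: "AE x in \<mu>. upper_density m \<mu> \<alpha> x < \<infinity> \<and> 0 < lower_density m \<mu> \<alpha> x \<and>
      upper_density m \<mu> \<alpha> x / lower_density m \<mu> \<alpha> x \<le> C"
    using assms(8) AEC by eventually_elim auto
  have ne: "ae_filter \<mu> \<noteq> bot" using assms(7) ae_filter_eq_bot_iff[of \<mu>] by simp
  have fin_pos: "\<exists>l u. lower_density m \<mu> \<alpha> x = ereal l \<and> upper_density m \<mu> \<alpha> x = ereal u \<and> 0 < l \<and> l \<le> u"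
    if "upper_density m \<mu> \<alpha> x < \<infinity>" "0 < lower_density m \<mu> \<alpha> x" for x
  proof -
    have le: "lower_density m \<mu> \<alpha> x \<le> upper_density m \<mu> \<alpha> x" by (rule T.ld_le_ud)
    show ?thesis using that le
      by (cases "lower_density m \<mu> \<alpha> x"; cases "upper_density m \<mu> \<alpha> x") auto
  qed
  show ?thesis
  proof (cases "C = \<infinity>")
    case True
    then show ?thesis unfolding C_def[symmetric] by simp
  next
    case False
    obtain x0 where x0: "upper_density m \<mu> \<alpha> x0 < \<infinity>" "0 < lower_density m \<mu> \<alpha> x0"
      "upper_density m \<mu> \<alpha> x0 / lower_density m \<mu> \<alpha> x0 \<le> C"
      using eventually_happens[OF AE3] ne by auto
    obtain l0 u0 where lu0: "lower_density m \<mu> \<alpha> x0 = ereal l0" "upper_density m \<mu> \<alpha> x0 = ereal u0"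
      "0 < l0" "l0 \<le> u0" using fin_pos[OF x0(1,2)] by blast
    have "ereal (u0 / l0) \<le> C" using x0(3) lu0 by simp
    moreover have "0 < u0 / l0" using lu0 by simp
    ultimately obtain c where Cc: "C = ereal c" and cpos: "0 < c" using False
      by (cases C) auto
    have key: "upper_density m \<mu> \<alpha> x \<le> ereal c * lower_density m \<mu> \<alpha> x"
      if hx: "upper_density m \<mu> \<alpha> x < \<infinity>" "0 < lower_density m \<mu> \<alpha> x"
        "upper_density m \<mu> \<alpha> x / lower_density m \<mu> \<alpha> x \<le> ereal c" for x
    proof -
      obtain l u where lu: "lower_density m \<mu> \<alpha> x = ereal l" "upper_density m \<mu> \<alpha> x = ereal u"
        "0 < l" "l \<le> u" using fin_pos[OF hx(1,2)] by blast
      have "u / l \<le> c" using hx(3) lu by simp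
      then have "u \<le> c * l" using lu(3) by (simp add: pos_divide_le_eq)
      then show ?thesis using lu by simp
    qed
    have AEG: "AE x in \<mu>. T.GP \<alpha> c x"
      using AE3 unfolding T.GP_def Cc by eventually_elim (auto intro: key)
    have sp0: "emeasure \<mu> (space \<mu>) \<noteq> 0" using assms(7) .
    have r1: "1 < real m powr (\<alpha> * real i)" if "1 \<le> i" for i
    proof -
      have "1 < real m" using assms(1) by simp
      moreover have "0 < \<alpha> * real i" using assms(2) that by simp
      ultimately show ?thesis by simp
    qed
    have A: "real m powr (\<alpha> * real i) / real_of_int \<lfloor>real m powr (\<alpha> * real i)\<rfloor> \<le> c" if "1 \<le> i" for i
      by (rule RA[OF r1[OF that] cpos]) (rule T.winA[OF AEG sp0])
    have B: "real_of_int \<lceil>real m powr (\<alpha> * real i)\<rceil> / real m powr (\<alpha> * real i) \<le> c" if "1 \<le> i" for i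
    proof (rule RB[OF _ cpos])
      show "0 < real m powr (\<alpha> * real i)" using r1[OF that] by linarith
    qed (rule T.winB[OF AEG sp0])
    show ?thesis unfolding C_def[symmetric] Cc
    proof (rule SUP_least)
      fix ij :: "nat \<times> nat" assume "ij \<in> {1..} \<times> {1..}"
      then have "1 \<le> fst ij" "1 \<le> snd ij" by auto
      then show "ereal (max (real m powr (\<alpha> * real (fst ij)) / real_of_int \<lfloor>real m powr (\<alpha> * real (fst ij))\<rfloor>)
                  (real_of_int \<lceil>real m powr (\<alpha> * real (snd ij))\<rceil> / real m powr (\<alpha> * real (snd ij)))) \<le> ereal c"
        using A B by simp
    qed
  qed
qed

end
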